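(* Let $\mathcal{A}_l\subseteq\mathcal{A}$ be nonempty, let $\alpha=\frac{T_{\mathrm{off}}}{T_{\mathrm{off}}+T}$, let $\pi^*\in\arg\max_{\pi\in\Delta(\mathcal{A}_l)}\log\det\big(V_{(1-\alpha)\pi+\alpha\pi_{\mathrm{off}}}\big)$ and $\tilde\pi^\star=(1-\alpha)\pi^*+\alpha\pi_{\mathrm{off}}$. Then $$d=(1-\alpha)g_{\mathcal{A}_l}(\tilde\pi^\star)+\alpha\sum_{a\in\mathcal{A}}\pi_{\mathrm{off}}(a)\|a\|^2_{V^{-1}_{\tilde\pi^\star}},\qquad (1-\alpha)g_{\mathcal{A}_l}(\tilde\pi^\star)\le d_{\mathrm{eff}},$$ and for every $\pi\in\Delta(\mathcal{A}_l)$, writing $\tilde\pi=(1-\alpha)\pi+\alpha\pi_{\mathrm{off}}$ (with $V_{\tilde\pi}$ invertible), $$d\le(1-\alpha)g_{\mathcal{A}_l}(\tilde\pi)+\alpha\sum_{a\in\mathcal{A}}\pi_{\mathrm{off}}(a)\|a\|^2_{V^{-1}_{\tilde\pi}}.$$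
   Context: $\mathcal{A}\subset\mathbb{R}^d$ is finite with $\mathrm{span}(\mathcal{A})=\mathbb{R}^d$; $\pi_{\mathrm{off}}\in\Delta(\mathcal{A})$ (probability simplex over $\mathcal{A}$); $T,T_{\mathrm{off}}$ are nonnegative integers with $T\ge1$. For $\pi\in\Delta(\mathcal{A})$, $V_\pi=\sum_a\pi(a)aa^\top$, $\|x\|_B=\sqrt{x^\top Bx}$, $g_{\mathcal{B}}(\pi)=\max_{a\in\mathcal{B}}\|a\|^2_{V_\pi^{-1}}$, $\lambda_k(B)$ the $k$-th smallest eigenvalue, and $d_{\mathrm{eff}}=\min\big(\sum_{k=1}^d(1+\frac{T_{\mathrm{off}}}{T}\frac{\lambda_k(V_{\pi_{\mathrm{off}}})}{\max_a\|a\|^2})^{-1},\frac{T}{T_{\mathrm{off}}}g_{\mathcal{A}}(\pi_{\mathrm{off}})\big)$ (the second term being $+\infty$ when undefined). *)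

theory Defs
  imports "HOL-Analysis.Analysis" "HOL-Computational_Algebra.Computational_Algebra"
    "HOL-Library.Extended_Real"
begin

definition prob_simplex :: "'a set \<Rightarrow> ('a \<Rightarrow> real) set" where
  "prob_simplex B = {p. (\<forall>a. 0 \<le> p a) \<and> (\<forall>a. a \<notin> B \<longrightarrow> p a = 0) \<and> sum p B = 1}"

definition outer :: "real^'n \<Rightarrow> real^'n \<Rightarrow> real^'n^'n" where
  "outer x y = (\<chi> i j. x $ i * y $ j)"

definition Vmat :: "(real^'n) set \<Rightarrow> (real^'n \<Rightarrow> real) \<Rightarrow> real^'n^'n" where
  "Vmat A p = (\<Sum>a\<in>A. p a *\<^sub>R outer a a)"

definition wnorm2 :: "real^'n \<Rightarrow> real^'n^'n \<Rightarrow> real" where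
  "wnorm2 x B = x \<bullet> (B *v x)"

definition gfun :: "(real^'n) set \<Rightarrow> (real^'n) set \<Rightarrow> (real^'n \<Rightarrow> real) \<Rightarrow> real" where
  "gfun A B p = Max ((\<lambda>a. wnorm2 a (matrix_inv (Vmat A p))) ` B)"

definition logdet :: "real^'n^'n \<Rightarrow> ereal" where
  "logdet M = (if det M > 0 then ereal (ln (det M)) else -\<infinity>)"

definition charpoly :: "real^'n^'n \<Rightarrow> real poly" where
  "charpoly M = det (\<chi> i j. (if i = j then [:0, 1:] else 0) - [:M $ i $ j:])"

text \<open>lambda_k(M): k-th smallest eigenvalue (k = 1..d), counted with multiplicity.\<close>
definition eig :: "real^'n^'n \<Rightarrow> nat \<Rightarrow> real" where
  "eig M k = sorted_list_of_multiset (proots (charpoly M)) ! (k - 1)"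

definition mix :: "real \<Rightarrow> ('a \<Rightarrow> real) \<Rightarrow> ('a \<Rightarrow> real) \<Rightarrow> 'a \<Rightarrow> real" where
  "mix \<alpha> p q = (\<lambda>a. (1 - \<alpha>) * p a + \<alpha> * q a)"

text \<open>Effective dimension d_eff; the second term is +infinity when undefined
  (T_off = 0 or V_{pi_off} singular).\<close>
definition d_eff :: "(real^'n) set \<Rightarrow> (real^'n \<Rightarrow> real) \<Rightarrow> nat \<Rightarrow> nat \<Rightarrow> ereal" where
  "d_eff A poff T Toff =
     min (ereal (\<Sum>k=1..CARD('n).
            inverse (1 + (real Toff / real T) * eig (Vmat A poff) k / Max ((\<lambda>a. (norm a)\<^sup>2) ` A))))
         (if Toff > 0 \<and> invertible (Vmat A poff)
          then ereal (real T / real Toff * gfun A A poff) else \<infinity>)"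

end

theory Submission
  imports Defs
begin


definition symq :: "real^'n^'n \<Rightarrow> bool" where
  "symq S \<longleftrightarrow> (\<forall>x y. y \<bullet> (S *v x) = x \<bullet> (S *v y))"

lemma scaleR_mulv: "(c *\<^sub>R M) *v y = c *\<^sub>R (M *v y)" for c and M :: "real^'n^'n"
    by (simp add: vec_eq_iff matrix_vector_mult_def sum_distrib_left mult_ac)

lemma scaleR_mulv': "M *v (c *\<^sub>R y) = c *\<^sub>R (M *v y)" for c and M :: "real^'n^'n"
    by (simp add: vec_eq_iff matrix_vector_mult_def sum_distrib_left mult_ac)

lemma no_lin:
  fixes b c :: real
  assumes "\<And>t. 2*t*b \<le> t^2*c"
  shows "b = 0"
proof -
  define t where "t = b / (\<bar>c\<bar> + 1)"
  have pos: "\<bar>c\<bar> + 1 > 0" by simp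
  define k where "k = \<bar>c\<bar> + 1"
  have tk: "t*k = b" using pos unfolding t_def k_def by simp
  have "2*t*b*k^2 \<le> t^2*c*k^2" by (rule mult_right_mono[OF assms]) simp
  moreover have "2*t*b*k^2 = 2*b*b*k" using tk by (simp add: power2_eq_square algebra_simps)
  moreover have "t^2*c*k^2 = b*b*c" using tk by (simp add: power2_eq_square algebra_simps)
  ultimately have "2*b*b*(\<bar>c\<bar> + 1) \<le> b*b*c" unfolding k_def by simp
  moreover have "b*b*c \<le> b*b*\<bar>c\<bar>" by (simp add: mult_left_mono)
  ultimately have "b*b*(\<bar>c\<bar>+2) \<le> 0" by (simp add: algebra_simps)
  moreover have "b*b \<ge> 0" by simp
  ultimately have "b*b = 0" by (smt (verit) mult_nonneg_nonneg mult_le_0_iff)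
  thus ?thesis by simp
qed

lemma closedK: "closed {x::real^'n. \<forall>j\<in>J. v j \<bullet> x = 0}"
proof -
  have "{x::real^'n. \<forall>j\<in>J. v j \<bullet> x = 0} = (\<Inter>j\<in>J. {x. v j \<bullet> x = 0})" by auto
  thus ?thesis by (simp add: closed_INT closed_hyperplane)
qed

lemma contf: "continuous_on X (\<lambda>x::real^'n. x \<bullet> (S *v x))"
  by (intro continuous_intros)

lemma dimcart: "DIM(real^'n) = CARD('n)" by simp

lemma eig_step:
  fixes S :: "real^'n^'n" and v :: "'n \<Rightarrow> real^'n"
  assumes sym: "symq S"
    and on: "\<forall>i\<in>J. \<forall>j\<in>J. v i \<bullet> v j = (if i = j then 1 else 0)"
    and ev: "\<forall>j\<in>J. S *v v j = \<mu> j *\<^sub>R v j"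
    and cJ: "card J < CARD('n)"
  shows "\<exists>x lam. norm x = 1 \<and> (\<forall>j\<in>J. v j \<bullet> x = 0) \<and> S *v x = lam *\<^sub>R x"
proof -
  define f where "f = (\<lambda>x::real^'n. x \<bullet> (S *v x))"
  define K where "K = sphere (0::real^'n) 1 \<inter> {x. \<forall>j\<in>J. v j \<bullet> x = 0}"
  have Kchar: "x \<in> K \<longleftrightarrow> norm x = 1 \<and> (\<forall>j\<in>J. v j \<bullet> x = 0)" for x
    unfolding K_def by auto
  have dimJ: "dim (v ` J) < DIM(real^'n)"
  proof -
    have "dim (v ` J) \<le> card (v ` J)" by (rule dim_le_card') (use cJ card.infinite in \<open>auto intro: finite_subset\<close>)
    also have "\<dots> \<le> card J" by (rule card_image_le) simp
    finally show ?thesis using cJ by simp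
  qed
  then obtain z where z: "z \<noteq> 0" "\<And>y. y \<in> span (v ` J) \<Longrightarrow> orthogonal z y"
    using orthogonal_to_subspace_exists[OF dimJ] by blast
  define x0 where "x0 = z /\<^sub>R norm z"
  have zJ: "v j \<bullet> z = 0" if "j \<in> J" for j
    using z(2)[of "v j"] that by (simp add: orthogonal_def span_base inner_commute)
  have "x0 \<in> K" unfolding Kchar x0_def using z zJ by auto
  hence Kne: "K \<noteq> {}" by auto
  have Kc: "compact K" unfolding K_def by (intro compact_Int_closed compact_sphere closedK)
  have "continuous_on K f" unfolding f_def by (intro continuous_intros)
  then obtain x where xK: "x \<in> K" and xmax: "\<And>y. y \<in> K \<Longrightarrow> f y \<le> f x"
    using continuous_attains_sup[OF Kc Kne] by blast
  define lam where "lam = f x"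
  have nx: "norm x = 1" and xJ: "\<forall>j\<in>J. v j \<bullet> x = 0" using xK Kchar by auto
  have xx: "x \<bullet> x = 1" using nx by (simp add: norm_eq_sqrt_inner)
  have var: "y \<bullet> (S *v x) = 0" if yJ: "\<forall>j\<in>J. v j \<bullet> y = 0" and yx: "y \<bullet> x = 0" for y
  proof (rule no_lin)
    fix t :: real
    define z where "z = x + t *\<^sub>R y"
    have zz: "z \<bullet> z = 1 + t^2 * (y \<bullet> y)"
      unfolding z_def using xx yx by (simp add: algebra_simps inner_commute power2_eq_square)
    have zpos: "z \<bullet> z > 0" unfolding zz by (simp add: add_pos_nonneg)
    hence nz: "norm z > 0" by (simp add: norm_eq_sqrt_inner)
    have "z /\<^sub>R norm z \<in> K" unfolding Kchar
      using nz xJ yJ by (auto simp: z_def inner_add_right)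
    hence "f (z /\<^sub>R norm z) \<le> lam" using xmax lam_def by auto
    moreover have "f (z /\<^sub>R norm z) = f z / (z \<bullet> z)"
    proof -
      have "f (z /\<^sub>R norm z) = (1 / norm z)^2 * f z"
        unfolding f_def by (simp add: scaleR_mulv' power2_eq_square divide_inverse)
      also have "(norm z)^2 = z \<bullet> z" by (simp add: dot_square_norm)
      hence "(1 / norm z)^2 = 1 / (z \<bullet> z)" by (simp add: power_one_over)
      finally show ?thesis by simp
    qed
    ultimately have "f z \<le> lam * (z \<bullet> z)" using zpos by (simp add: divide_le_eq)
    moreover have "f z = lam + 2 * t * (y \<bullet> (S *v x)) + t^2 * f y"
    proof -
      have "x \<bullet> (S *v y) = y \<bullet> (S *v x)" using sym unfolding symq_def by metis
      thus ?thesis unfolding f_def lam_def z_def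
        by (simp add: matrix_vector_right_distrib scaleR_mulv' inner_add_left inner_add_right
            algebra_simps power2_eq_square)
    qed
    ultimately show "2 * t * (y \<bullet> (S *v x)) \<le> t^2 * (lam * (y \<bullet> y) - f y)"
      unfolding zz by (simp add: algebra_simps)
  qed
  define w where "w = S *v x - lam *\<^sub>R x"
  have wJ: "\<forall>j\<in>J. v j \<bullet> w = 0"
  proof
    fix j assume j: "j \<in> J"
    have "v j \<bullet> (S *v x) = x \<bullet> (S *v v j)" using sym unfolding symq_def by metis
    also have "\<dots> = 0" using ev xJ j by (simp add: inner_commute)
    finally show "v j \<bullet> w = 0" using xJ j unfolding w_def by (simp add: inner_diff_right)
  qed
  have wx: "w \<bullet> x = 0"
  proof -
    have "w \<bullet> x = (S *v x) \<bullet> x - lam * (x \<bullet> x)" unfolding w_def by (simp add: inner_diff_left)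
    also have "(S *v x) \<bullet> x = lam" unfolding lam_def f_def by (rule inner_commute)
    finally show ?thesis using xx by simp
  qed
  have "w \<bullet> (S *v x) = 0" by (rule var[OF wJ wx])
  moreover have "w \<bullet> (S *v x) = w \<bullet> w"
  proof -
    have "S *v x = w + lam *\<^sub>R x" unfolding w_def by simp
    thus ?thesis using wx by (simp add: inner_add_right)
  qed
  ultimately have "w = 0" by simp
  hence "S *v x = lam *\<^sub>R x" unfolding w_def by simp
  thus ?thesis using nx xJ by blast
qed




lemma outer_mulv: "outer a a *v x = (a \<bullet> x) *\<^sub>R (a::real^'n)"
  by (simp add: outer_def vec_eq_iff matrix_vector_mult_def inner_vec_def sum_distrib_left sum_distrib_right algebra_simps)

lemma sum_mulv: "(\<Sum>b\<in>A. (M b :: real^'n^'n)) *v x = (\<Sum>b\<in>A. M b *v x)"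
  by (simp add: vec_eq_iff matrix_vector_mult_def sum_component sum_distrib_right sum.swap[of _ UNIV A])

lemma Vmat_mulv: "Vmat A w *v x = (\<Sum>b\<in>A. (w b * (b \<bullet> x)) *\<^sub>R b)"
  unfolding Vmat_def sum_mulv by (simp add: scaleR_mulv outer_mulv)

lemma Vmat_quad: "y \<bullet> (Vmat A w *v x) = (\<Sum>b\<in>A. w b * (b \<bullet> x) * (b \<bullet> y))"
  unfolding Vmat_mulv by (simp add: inner_sum_right inner_commute)

lemma Vmat_sym: "y \<bullet> (Vmat A w *v x) = x \<bullet> (Vmat A w *v y)"
  unfolding Vmat_quad by (simp add: mult_ac)

lemma Vmat_psd: "(\<And>b. b \<in> A \<Longrightarrow> 0 \<le> w b) \<Longrightarrow> 0 \<le> x \<bullet> (Vmat A w *v x)"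
  unfolding Vmat_quad by (intro sum_nonneg) (metis mult.assoc mult_nonneg_nonneg zero_le_square)

lemma trace_outer: "trace (X ** outer a a) = a \<bullet> (X *v (a::real^'n))"
  by (simp add: trace_def outer_def matrix_matrix_mult_def matrix_vector_mult_def inner_vec_def sum_distrib_left sum_distrib_right mult_ac)

lemma trace_sum: "trace (\<Sum>b\<in>A. (M b :: real^'n^'n)) = (\<Sum>b\<in>A. trace (M b))"
  by (simp add: trace_def sum_component sum.swap[of _ UNIV A])

lemma mult_sum: "X ** (\<Sum>b\<in>A. (M b :: real^'n^'n)) = (\<Sum>b\<in>A. X ** M b)"
  by (simp add: vec_eq_iff matrix_matrix_mult_def sum_component sum_distrib_left sum.swap[of _ UNIV A])

lemma trace_scaleR: "trace (X ** (c *\<^sub>R M)) = c * trace (X ** M)" for c and M X :: "real^'n^'n"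
    by (simp add: trace_def matrix_matrix_mult_def sum_distrib_left mult_ac)

lemma trace_Vmat: "trace (X ** Vmat A w) = (\<Sum>b\<in>A. w b * wnorm2 b X)"
  unfolding Vmat_def mult_sum trace_sum wnorm2_def
  by (simp add: trace_outer trace_scaleR)




lemma spectral_J:
  fixes S :: "real^'n^'n" and J :: "'n set"
  assumes sym: "symq S"
  shows "\<exists>v \<mu>. (\<forall>i\<in>J. \<forall>j\<in>J. v i \<bullet> v j = (if i = j then 1 else 0)) \<and> (\<forall>j\<in>J. S *v v j = \<mu> j *\<^sub>R v j)"
proof -
  have "finite J" by simp
  then show ?thesis
proof (induction J rule: finite_induct)
  case empty
  then show ?case by auto
next
  case (insert i J)
  then obtain v \<mu> where on: "\<forall>i\<in>J. \<forall>j\<in>J. v i \<bullet> v j = (if i = j then 1 else 0)"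
    and ev: "\<forall>j\<in>J. S *v v j = \<mu> j *\<^sub>R v j" by blast
  have "card J < card (insert i J)" using insert by simp
  also have "\<dots> \<le> CARD('n)" by (rule card_mono) auto
  finally have cJ: "card J < CARD('n)" .
  obtain x lam where x: "norm x = 1" "\<forall>j\<in>J. v j \<bullet> x = 0" "S *v x = lam *\<^sub>R x"
    using eig_step[OF sym on ev cJ] by blast
  have xx: "x \<bullet> x = 1" using x(1) by (simp add: norm_eq_sqrt_inner)
  define v' where "v' = v(i := x)"
  define \<mu>' where "\<mu>' = \<mu>(i := lam)"
  have "\<forall>a\<in>insert i J. \<forall>b\<in>insert i J. v' a \<bullet> v' b = (if a = b then 1 else 0)"
  proof -
    have xJ': "\<forall>j\<in>J. x \<bullet> v j = 0" using x(2) by (metis inner_commute)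
    show ?thesis using on x(2) xJ' xx insert(2) unfolding v'_def by auto
  qed
  moreover have "\<forall>j\<in>insert i J. S *v v' j = \<mu>' j *\<^sub>R v' j"
    using ev x(3) insert(2) unfolding v'_def \<mu>'_def by auto
  ultimately show ?case by blast
qed
qed

lemma spectral:
  fixes S :: "real^'n^'n"
  assumes sym: "symq S"
  obtains v :: "'n \<Rightarrow> real^'n" and \<mu> where "\<And>i j. v i \<bullet> v j = (if i = j then 1 else 0)" "\<And>j. S *v v j = \<mu> j *\<^sub>R v j"
  using spectral_J[OF sym, of UNIV] by auto


definition Qm :: "('n \<Rightarrow> real^'n) \<Rightarrow> real^'n^'n" where
  "Qm v = (\<chi> r j. v j $ r)"

lemma QtQ:
  assumes "\<And>i j. v i \<bullet> v j = (if i = j then 1 else 0)"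
  shows "transpose (Qm v) ** Qm v = mat 1"
  using assms by (simp add: vec_eq_iff Qm_def matrix_matrix_mult_def transpose_def inner_vec_def mat_def)
lemma QQt:
  assumes "\<And>i j. v i \<bullet> v j = (if i = j then 1 else 0)"
  shows "Qm v ** transpose (Qm v) = mat 1"
  using QtQ[OF assms] matrix_left_right_inverse by blast

lemma detQ:
  assumes "\<And>i j. v i \<bullet> v j = (if i = j then 1 else 0)"
  shows "det (Qm v) \<noteq> 0"
proof -
  have "det (transpose (Qm v)) * det (Qm v) = 1"
    using QtQ[OF assms] by (metis det_I det_mul)
  thus ?thesis by auto
qed
lemma Qm_mulv: "Qm v *v y = (\<Sum>j\<in>UNIV. (y $ j) *\<^sub>R v j)"
  by (simp add: vec_eq_iff Qm_def matrix_vector_mult_def sum_component mult.commute)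

lemma Qmt_mulv: "transpose (Qm v) *v x = (\<chi> j. v j \<bullet> x)"
  by (simp add: vec_eq_iff Qm_def matrix_vector_mult_def transpose_def inner_vec_def)

lemma expansion:
  fixes v :: "'n \<Rightarrow> real^'n"
  assumes "\<And>i j. v i \<bullet> v j = (if i = j then 1 else 0)"
  shows "x = (\<Sum>j\<in>UNIV. (v j \<bullet> x) *\<^sub>R v j)"
proof -
  have "x = (Qm v ** transpose (Qm v)) *v x" using QQt[OF assms] by simp
  also have "\<dots> = Qm v *v (transpose (Qm v) *v x)" by (rule matrix_vector_mul_assoc[symmetric])
  also have "\<dots> = (\<Sum>j\<in>UNIV. (v j \<bullet> x) *\<^sub>R v j)" unfolding Qmt_mulv Qm_mulv by simp
  finally show ?thesis .
qed



lemma poly_det: "poly (det (P :: real poly^'n^'n)) x = det (\<chi> i j. poly (P $ i $ j) x)"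
  unfolding det_def by (simp add: poly_sum poly_prod)

lemma charpoly_eval: "poly (charpoly S) x = det (\<chi> i j. (if i = j then x else 0) - (S :: real^'n^'n) $ i $ j)"
  unfolding charpoly_def poly_det by (rule arg_cong[where f=det]) (simp add: vec_eq_iff)

lemma sum_single_mset: "finite A \<Longrightarrow> (\<Sum>j\<in>A. {#g j#}) = image_mset g (mset_set A)"
  by (induction A rule: finite_induct) auto

lemma shift_sum: "(\<Sum>k=1..(n::nat). g (k - 1)) = (\<Sum>k<n. (g k :: 'a::comm_monoid_add))"
  by (induction n) (auto simp: atLeastAtMostSuc_conv add.commute)

lemma det_shift:
  fixes S :: "real^'n^'n" and v :: "'n \<Rightarrow> real^'n"
  assumes on: "\<And>i j. v i \<bullet> v j = (if i = j then 1 else 0)" and ev: "\<And>j. S *v v j = \<mu> j *\<^sub>R v j"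
  shows "det (\<chi> i j. (if i = j then x else 0) - S $ i $ j) = (\<Prod>j\<in>UNIV. x - \<mu> j)"
proof -
  define N where "N = (\<chi> i j. (if i = j then x else 0) - S $ i $ j)"
  define D where "D = (\<chi> i j. if i = j then x - \<mu> i else (0::real))"
  have Sv: "(\<Sum>k\<in>UNIV. S $ r $ k * v j $ k) = \<mu> j * v j $ r" for r j
    using arg_cong[OF ev[of j], of "\<lambda>y. y $ r"] by (simp add: matrix_vector_mult_def)
  have "N ** Qm v = Qm v ** D"
  proof -
    have "(N ** Qm v) $ r $ j = (Qm v ** D) $ r $ j" for r j
    proof -
      have "(N ** Qm v) $ r $ j = (\<Sum>k\<in>UNIV. (if r = k then x else 0) * v j $ k) - (\<Sum>k\<in>UNIV. S $ r $ k * v j $ k)"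
        by (simp add: N_def Qm_def matrix_matrix_mult_def left_diff_distrib sum_subtractf)
      also have "(\<Sum>k\<in>UNIV. (if r = k then x else 0) * v j $ k) = (\<Sum>k\<in>UNIV. if r = k then x * v j $ k else 0)"
        by (rule sum.cong) auto
      also have "\<dots> = x * v j $ r" by simp
      also have "x * v j $ r - (\<Sum>k\<in>UNIV. S $ r $ k * v j $ k) = x * v j $ r - \<mu> j * v j $ r" by (simp add: Sv)
      also have "\<dots> = (Qm v ** D) $ r $ j"
        by (simp add: D_def Qm_def matrix_matrix_mult_def algebra_simps if_distrib cong: if_cong)
      finally show ?thesis .
    qed
    thus ?thesis by (simp add: vec_eq_iff)
  qed
  hence "det N * det (Qm v) = det (Qm v) * det D" by (metis det_mul)
  hence "det N = det D" using detQ[OF on] by simp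
  also have "det D = (\<Prod>j\<in>UNIV. x - \<mu> j)" by (subst det_diagonal) (auto simp: D_def)
  finally show ?thesis unfolding N_def .
qed

lemma det_spec:
  fixes S :: "real^'n^'n" and v :: "'n \<Rightarrow> real^'n"
  assumes on: "\<And>i j. v i \<bullet> v j = (if i = j then 1 else 0)" and ev: "\<And>j. S *v v j = \<mu> j *\<^sub>R v j"
  shows "det S = (\<Prod>j\<in>UNIV. \<mu> j)"
proof -
  define D where "D = (\<chi> i j. if i = j then \<mu> i else (0::real))"
  have Sv: "(\<Sum>k\<in>UNIV. S $ r $ k * v j $ k) = \<mu> j * v j $ r" for r j
    using arg_cong[OF ev[of j], of "\<lambda>y. y $ r"] by (simp add: matrix_vector_mult_def)
  have "S ** Qm v = Qm v ** D"
  proof -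
    have "(S ** Qm v) $ r $ j = (Qm v ** D) $ r $ j" for r j
    proof -
      have "(S ** Qm v) $ r $ j = (\<Sum>k\<in>UNIV. S $ r $ k * v j $ k)"
        by (simp add: Qm_def matrix_matrix_mult_def)
      also have "\<dots> = \<mu> j * v j $ r" by (simp add: Sv)
      also have "\<dots> = (Qm v ** D) $ r $ j"
        by (simp add: D_def Qm_def matrix_matrix_mult_def algebra_simps if_distrib cong: if_cong)
      finally show ?thesis .
    qed
    thus ?thesis by (simp add: vec_eq_iff)
  qed
  hence "det S * det (Qm v) = det (Qm v) * det D" by (metis det_mul)
  hence "det S = det D" using detQ[OF on] by simp
  also have "det D = (\<Prod>j\<in>UNIV. \<mu> j)" by (subst det_diagonal) (auto simp: D_def)
  finally show ?thesis .
qed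


lemma charpoly_spec:
  fixes S :: "real^'n^'n" and v :: "'n \<Rightarrow> real^'n"
  assumes on: "\<And>i j. v i \<bullet> v j = (if i = j then 1 else 0)" and ev: "\<And>j. S *v v j = \<mu> j *\<^sub>R v j"
  shows "charpoly S = (\<Prod>j\<in>UNIV. [:- \<mu> j, 1:])"
proof -
  have "poly (charpoly S) x = poly (\<Prod>j\<in>UNIV. [:- \<mu> j, 1:]) x" for x
    unfolding charpoly_eval det_shift[OF on ev] by (simp add: poly_prod)
  thus ?thesis using poly_eq_poly_eq_iff by blast
qed

lemma eig_sum:
  fixes S :: "real^'n^'n" and v :: "'n \<Rightarrow> real^'n"
  assumes on: "\<And>i j. v i \<bullet> v j = (if i = j then 1 else 0)" and ev: "\<And>j. S *v v j = \<mu> j *\<^sub>R v j"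
  shows "(\<Sum>k=1..CARD('n). f (eig S k)) = (\<Sum>j\<in>UNIV. f (\<mu> j))"
proof -
  define L where "L = sorted_list_of_multiset (proots (charpoly S))"
  have "proots (charpoly S) = (\<Sum>j\<in>UNIV. proots [:- \<mu> j, 1:])"
    unfolding charpoly_spec[OF on ev] by (rule proots_prod) simp
  also have "\<dots> = (\<Sum>j\<in>UNIV. {#\<mu> j#})" by simp
  also have "\<dots> = image_mset \<mu> (mset_set UNIV)" by (rule sum_single_mset) simp
  finally have mL: "mset L = image_mset \<mu> (mset_set UNIV)" unfolding L_def by simp
  hence len: "length L = CARD('n)" by (metis size_mset size_image_mset size_mset_set)
  have "(\<Sum>k=1..CARD('n). f (eig S k)) = (\<Sum>k=1..CARD('n). f (L ! (k - 1)))"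
    unfolding eig_def L_def by simp
  also have "\<dots> = (\<Sum>k<CARD('n). f (L ! k))" by (rule shift_sum)
  also have "\<dots> = sum_list (map f L)"
    by (simp add: sum_list_sum_nth len lessThan_atLeast0)
  also have "\<dots> = sum_mset (image_mset f (mset L))" by (metis sum_mset_sum_list mset_map)
  also have "\<dots> = (\<Sum>j\<in>UNIV. f (\<mu> j))" unfolding mL sum_unfold_sum_mset[of "\<lambda>j. f (\<mu> j)"]
    by (simp add: image_mset.compositionality o_def)
  finally show ?thesis .
qed




lemma inv_props:
  assumes "invertible (M :: real^'n^'n)"
  shows "M ** matrix_inv M = mat 1" "matrix_inv M ** M = mat 1"
  using someI_ex[OF assms[unfolded invertible_def]] unfolding matrix_inv_def by auto

lemma Vmat_add: "Vmat A (\<lambda>b. f b + g b) = Vmat A f + Vmat A g"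
  unfolding Vmat_def by (simp add: scaleR_add_left sum.distrib)

lemma Vmat_diff: "Vmat A (\<lambda>b. f b - g b) = Vmat A f - Vmat A g"
  unfolding Vmat_def by (simp add: scaleR_diff_left sum_subtractf)

lemma Vmat_cmult: "Vmat A (\<lambda>b. c * f b) = c *\<^sub>R Vmat A f"
  unfolding Vmat_def by (simp add: scaleR_sum_right)

lemma Vmat_mix: "Vmat A (mix \<alpha> p q) = (1 - \<alpha>) *\<^sub>R Vmat A p + \<alpha> *\<^sub>R Vmat A q"
  unfolding mix_def Vmat_add Vmat_cmult ..

lemma Vmat_delta: "finite A \<Longrightarrow> a \<in> A \<Longrightarrow> Vmat A (\<lambda>b. if b = a then 1 else 0) = outer a a"
proof -
  assume "finite A" "a \<in> A"
  have "(\<Sum>b\<in>A. (if b = a then 1 else 0) *\<^sub>R outer b b) = (\<Sum>b\<in>A. if b = a then outer b b else 0)"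
    by (rule sum.cong) auto
  thus ?thesis unfolding Vmat_def using \<open>finite A\<close> \<open>a \<in> A\<close> by simp
qed

lemma trace_d:
  fixes A :: "(real^'n) set"
  assumes "invertible (Vmat A w)"
  shows "(\<Sum>b\<in>A. w b * wnorm2 b (matrix_inv (Vmat A w))) = real CARD('n)"
proof -
  have "trace (matrix_inv (Vmat A w) ** Vmat A w) = real CARD('n)"
    using inv_props[OF assms] by (simp add: trace_I)
  thus ?thesis unfolding trace_Vmat .
qed

lemma var_ineq:
  fixes V X :: "real^'n^'n"
  assumes psd: "\<And>z. 0 \<le> z \<bullet> (V *v z)" and sym: "\<And>x y. y \<bullet> (V *v x) = x \<bullet> (V *v y)"
    and VX: "V ** X = mat 1"
  shows "2 * (y \<bullet> v) - y \<bullet> (V *v y) \<le> v \<bullet> (X *v v)"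
proof -
  define u where "u = X *v v"
  have Vu: "V *v u = v" unfolding u_def matrix_vector_mul_assoc VX by simp
  have "0 \<le> (y - u) \<bullet> (V *v (y - u))" by (rule psd)
  also have "\<dots> = y \<bullet> (V *v y) - 2 * (y \<bullet> (V *v u)) + u \<bullet> (V *v u)"
    using sym[of u y] by (simp add: matrix_vector_mult_diff_distrib inner_diff_left inner_diff_right)
  also have "y \<bullet> (V *v u) = y \<bullet> v" using Vu by simp
  also have "u \<bullet> (V *v u) = v \<bullet> (X *v v)" unfolding Vu by (simp add: u_def inner_commute)
  finally show ?thesis by simp
qed

lemma perm_fix:
  assumes "p permutes (UNIV :: 'n set)" "p \<noteq> id"
  shows "\<exists>i. i \<noteq> j \<and> p i \<noteq> i"
proof -
  obtain i0 where i0: "p i0 \<noteq> i0" using assms(2) by (metis eq_id_iff)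
  show ?thesis
  proof (cases "i0 = j")
    case False thus ?thesis using i0 by blast
  next
    case True
    have "p (p j) \<noteq> p j"
    proof
      assume "p (p j) = p j"
      hence "p j = j" using permutes_inj[OF assms(1)] by (meson injD)
      thus False using i0 True by simp
    qed
    moreover have "p j \<noteq> j" using i0 True by simp
    ultimately show ?thesis by metis
  qed
qed

lemma det_deriv:
  fixes C :: "real^'n^'n"
  shows "((\<lambda>t. det (mat 1 + t *\<^sub>R C)) has_real_derivative trace C) (at 0)"
proof -
  define P where "P = {p. p permutes (UNIV :: 'n set)}"
  define D where "D = (\<lambda>p. of_int (sign p) * (\<Sum>j\<in>UNIV. C $ j $ p j * (\<Prod>i\<in>UNIV - {j}. (if i = p i then 1 else 0 :: real))))"
  have e: "det (mat 1 + t *\<^sub>R C) = (\<Sum>p\<in>P. of_int (sign p) * (\<Prod>i\<in>UNIV. (if i = p i then 1 else 0) + t * C $ i $ p i))" for t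
    unfolding det_def P_def by (simp add: mat_def)
  have "((\<lambda>t. \<Sum>p\<in>P. of_int (sign p) * (\<Prod>i\<in>UNIV. (if i = p i then 1 else 0) + t * C $ i $ p i)) has_real_derivative (\<Sum>p\<in>P. D p)) (at 0)"
  proof (rule DERIV_sum)
    fix p assume "p \<in> P"
    have "((\<lambda>t. \<Prod>i\<in>UNIV. (if i = p i then 1 else 0) + t * C $ i $ p i) has_real_derivative
        (\<Sum>j\<in>UNIV. C $ j $ p j * (\<Prod>i\<in>UNIV - {j}. (if i = p i then 1 else 0) + 0 * C $ i $ p i))) (at 0)"
      by (rule has_field_derivative_prod) (auto intro!: derivative_eq_intros)
    thus "((\<lambda>t. of_int (sign p) * (\<Prod>i\<in>UNIV. (if i = p i then 1 else 0) + t * C $ i $ p i)) has_real_derivative D p) (at 0)"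
      unfolding D_def by (auto intro: DERIV_cmult)
  qed
  moreover have "(\<Sum>p\<in>P. D p) = trace C"
  proof -
    have "D p = 0" if pP: "p \<in> P" and pid: "p \<noteq> id" for p
    proof -
      have z: "(\<Prod>i\<in>UNIV - {j}. (if i = p i then 1 else 0 :: real)) = 0" for j
      proof -
        obtain i where "i \<noteq> j" "p i \<noteq> i" using perm_fix[of p j] pP pid unfolding P_def by auto
        thus ?thesis by (intro prod_zero) (auto intro!: bexI[of _ i])
      qed
      show ?thesis unfolding D_def z by simp
    qed
    hence "(\<Sum>p\<in>P. D p) = (\<Sum>p\<in>P. if p = id then D id else 0)" by (intro sum.cong) auto
    also have "\<dots> = D id" using permutes_id unfolding P_def by simp
    also have "\<dots> = trace C" unfolding D_def trace_def by (simp add: sign_id)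
    finally show ?thesis .
  qed
  ultimately show ?thesis unfolding e by simp
qed




lemma symq_Vmat: "symq (Vmat A w)"
  unfolding symq_def using Vmat_sym by metis

lemma det_pos:
  fixes V :: "real^'n^'n"
  assumes sym: "symq V" and psd: "\<And>z. 0 \<le> z \<bullet> (V *v z)" and inv: "invertible V"
  shows "det V > 0"
proof -
  obtain v :: "'n \<Rightarrow> real^'n" and \<mu> where on: "\<And>i j. v i \<bullet> v j = (if i = j then 1 else 0)"
    and ev: "\<And>j. V *v v j = \<mu> j *\<^sub>R v j" using spectral[OF sym] by metis
  have "\<mu> j > 0" for j
  proof -
    have "\<mu> j = v j \<bullet> (V *v v j)" using ev[of j] on[of j j] by simp
    hence ge: "\<mu> j \<ge> 0" using psd by simp
    have "\<mu> j \<noteq> 0"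
    proof
      assume "\<mu> j = 0"
      hence "V *v v j = 0" using ev by simp
      hence "(matrix_inv V ** V) *v v j = 0" by (metis matrix_vector_mul_assoc matrix_vector_mult_0_right)
      hence "v j = 0" using inv_props(2)[OF inv] by simp
      thus False using on[of j j] by simp
    qed
    thus ?thesis using ge by simp
  qed
  thus ?thesis unfolding det_spec[OF on ev] by (simp add: prod_pos)
qed

lemma det_pos_Vmat:
  assumes "\<And>b. 0 \<le> w b" and "invertible (Vmat A w)"
  shows "det (Vmat A w) > 0"
  by (rule det_pos[OF symq_Vmat Vmat_psd assms(2)]) (use assms(1) in auto)

lemma sum_A_Al:
  assumes "finite A" "Al \<subseteq> A" "p \<in> prob_simplex Al"
  shows "(\<Sum>b\<in>A. p b * f b) = (\<Sum>b\<in>Al. p b * f b)"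
  using assms by (intro sum.mono_neutral_right) (auto simp: prob_simplex_def)

lemma wavg_le_max:
  assumes "finite Al" "p \<in> prob_simplex Al"
  shows "(\<Sum>b\<in>Al. p b * f b) \<le> Max (f ` Al)"
proof -
  have "(\<Sum>b\<in>Al. p b * f b) \<le> (\<Sum>b\<in>Al. p b * Max (f ` Al))"
    using assms by (intro sum_mono mult_left_mono) (auto simp: prob_simplex_def)
  also have "\<dots> = Max (f ` Al)" using assms by (simp add: prob_simplex_def sum_distrib_right[symmetric])
  finally show ?thesis .
qed

lemma mix_sum: "(\<Sum>b\<in>A. mix \<alpha> p r b * q b) = (1 - \<alpha>) * (\<Sum>b\<in>A. p b * q b) + \<alpha> * (\<Sum>b\<in>A. r b * q b)"
proof -
  have "(\<Sum>b\<in>A. mix \<alpha> p r b * q b) = (\<Sum>b\<in>A. (1 - \<alpha>) * (p b * q b) + \<alpha> * (r b * q b))"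
    unfolding mix_def by (rule sum.cong) (auto simp: algebra_simps)
  thus ?thesis by (simp add: sum.distrib sum_distrib_left)
qed

lemma d_split:
  fixes A :: "(real^'n) set"
  assumes "invertible (Vmat A (mix \<alpha> p poff))"
  shows "real CARD('n) = (1 - \<alpha>) * (\<Sum>b\<in>A. p b * wnorm2 b (matrix_inv (Vmat A (mix \<alpha> p poff))))
     + \<alpha> * (\<Sum>b\<in>A. poff b * wnorm2 b (matrix_inv (Vmat A (mix \<alpha> p poff))))"
  using trace_d[OF assms] unfolding mix_sum by simp

lemma claim3:
  fixes A :: "(real^'n) set"
  assumes fin: "finite A" and AlA: "Al \<subseteq> A" and ne: "Al \<noteq> {}" and a01: "0 \<le> \<alpha>" "\<alpha> < 1"
    and p: "p \<in> prob_simplex Al" and inv: "invertible (Vmat A (mix \<alpha> p poff))"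
  shows "real CARD('n) \<le> (1 - \<alpha>) * gfun A Al (mix \<alpha> p poff)
     + \<alpha> * (\<Sum>a\<in>A. poff a * wnorm2 a (matrix_inv (Vmat A (mix \<alpha> p poff))))"
proof -
  define q where "q = (\<lambda>b. wnorm2 b (matrix_inv (Vmat A (mix \<alpha> p poff))))"
  have finAl: "finite Al" using fin AlA finite_subset by blast
  have "(\<Sum>b\<in>A. p b * q b) = (\<Sum>b\<in>Al. p b * q b)" by (rule sum_A_Al[OF fin AlA p])
  also have "\<dots> \<le> gfun A Al (mix \<alpha> p poff)" unfolding gfun_def q_def by (rule wavg_le_max[OF finAl p])
  finally have "(1 - \<alpha>) * (\<Sum>b\<in>A. p b * q b) \<le> (1 - \<alpha>) * gfun A Al (mix \<alpha> p poff)"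
    using a01 by (intro mult_left_mono) auto
  thus ?thesis using d_split[OF inv] unfolding q_def by linarith
qed




lemma Vmix_quad: "y \<bullet> (Vmat A (mix \<alpha> p r) *v y) = (1 - \<alpha>) * (y \<bullet> (Vmat A p *v y)) + \<alpha> * (y \<bullet> (Vmat A r *v y))"
proof -
  have e: "y \<bullet> (Vmat A w *v y) = (\<Sum>b\<in>A. w b * ((b \<bullet> y) * (b \<bullet> y)))" for w
    unfolding Vmat_quad by (simp add: mult.assoc)
  show ?thesis unfolding e mix_sum ..
qed

lemma quad_le_L:
  fixes A Al :: "(real^'n) set"
  assumes fin: "finite A" and AlA: "Al \<subseteq> A" and p: "p \<in> prob_simplex Al"
    and L: "\<And>a. a \<in> A \<Longrightarrow> (norm a)^2 \<le> L"
  shows "y \<bullet> (Vmat A p *v y) \<le> L * (y \<bullet> y)"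
proof -
  have pn: "\<And>b. 0 \<le> p b" using p by (auto simp: prob_simplex_def)
  have "y \<bullet> (Vmat A p *v y) = (\<Sum>b\<in>A. p b * ((b \<bullet> y) * (b \<bullet> y)))"
    unfolding Vmat_quad by (simp add: mult.assoc)
  also have "\<dots> \<le> (\<Sum>b\<in>A. p b * (L * (y \<bullet> y)))"
  proof (intro sum_mono mult_left_mono pn)
    fix b assume b: "b \<in> A"
    have "(b \<bullet> y) * (b \<bullet> y) \<le> (b \<bullet> b) * (y \<bullet> y)" using Cauchy_Schwarz_ineq[of b y] by (simp add: power2_eq_square)
    also have "\<dots> \<le> L * (y \<bullet> y)" using L[OF b] by (intro mult_right_mono) (auto simp: dot_square_norm)
    finally show "(b \<bullet> y) * (b \<bullet> y) \<le> L * (y \<bullet> y)" .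
  qed
  also have "\<dots> = (\<Sum>b\<in>Al. p b * (L * (y \<bullet> y)))" by (rule sum_A_Al[OF fin AlA p])
  also have "\<dots> = L * (y \<bullet> y)" using p by (simp add: prob_simplex_def sum_distrib_right[symmetric])
  finally show ?thesis .
qed

lemma spec_decomp:
  fixes S :: "real^'n^'n" and v :: "'n \<Rightarrow> real^'n"
  assumes on: "\<And>i j. v i \<bullet> v j = (if i = j then 1 else 0)" and ev: "\<And>j. S *v v j = \<mu> j *\<^sub>R v j"
  shows "S = (\<Sum>j\<in>UNIV. \<mu> j *\<^sub>R outer (v j) (v j))"
proof -
  have "S *v x = (\<Sum>j\<in>UNIV. \<mu> j *\<^sub>R outer (v j) (v j)) *v x" for x
  proof -
    have "S *v x = S *v (\<Sum>j\<in>UNIV. (v j \<bullet> x) *\<^sub>R v j)" using expansion[OF on, of x] by simp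
    also have "\<dots> = (\<Sum>j\<in>UNIV. (v j \<bullet> x) *\<^sub>R (S *v v j))"
      by (simp add: linear_sum[OF matrix_vector_mul_linear] linear_cmul[OF matrix_vector_mul_linear] o_def)
    also have "\<dots> = (\<Sum>j\<in>UNIV. \<mu> j *\<^sub>R outer (v j) (v j) *v x)"
      by (simp add: ev outer_mulv scaleR_mulv mult.commute)
    also have "\<dots> = (\<Sum>j\<in>UNIV. \<mu> j *\<^sub>R outer (v j) (v j)) *v x" by (rule sum_mulv[symmetric])
    finally show ?thesis .
  qed
  thus ?thesis using matrix_eq by blast
qed

lemma claim2a:
  fixes A Al :: "(real^'n) set" and pstar poff :: "real^'n \<Rightarrow> real" and T Toff :: nat
  assumes fin: "finite A" and AlA: "Al \<subseteq> A" and pS: "pstar \<in> prob_simplex Al"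
    and poffS: "poff \<in> prob_simplex A" and T: "T \<ge> 1"
    and al: "\<alpha> = real Toff / (real Toff + real T)"
    and inv: "invertible (Vmat A (mix \<alpha> pstar poff))"
    and Lpos: "L > 0" and L: "\<And>a. a \<in> A \<Longrightarrow> (norm a)^2 \<le> L"
  shows "real CARD('n) - \<alpha> * (\<Sum>a\<in>A. poff a * wnorm2 a (matrix_inv (Vmat A (mix \<alpha> pstar poff))))
    \<le> (\<Sum>k=1..CARD('n). inverse (1 + (real Toff / real T) * eig (Vmat A poff) k / L))"
proof -
  have Tpos: "real T > 0" using T by simp
  have a0: "0 \<le> \<alpha>" unfolding al by simp
  have a1: "\<alpha> < 1" unfolding al using Tpos by (simp add: divide_less_eq)
  define V where "V = Vmat A (mix \<alpha> pstar poff)"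
  define X where "X = matrix_inv V"
  define Voff where "Voff = Vmat A poff"
  have psn: "\<And>b. 0 \<le> pstar b" using pS by (auto simp: prob_simplex_def)
  have pon: "\<And>b. 0 \<le> poff b" using poffS by (auto simp: prob_simplex_def)
  have wnn: "0 \<le> mix \<alpha> pstar poff b" for b
    unfolding mix_def using a0 a1 psn pon by (intro add_nonneg_nonneg mult_nonneg_nonneg) auto
  have VX: "V ** X = mat 1" unfolding X_def V_def using inv_props[OF inv] by simp
  have Vpsd: "\<And>z. 0 \<le> z \<bullet> (V *v z)" unfolding V_def by (rule Vmat_psd) (use wnn in auto)
  have Vsym: "\<And>x y. y \<bullet> (V *v x) = x \<bullet> (V *v y)" unfolding V_def by (rule Vmat_sym)
  obtain v :: "'n \<Rightarrow> real^'n" and \<mu> where on: "\<And>i j. v i \<bullet> v j = (if i = j then 1 else 0)"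
    and ev: "\<And>j. Voff *v v j = \<mu> j *\<^sub>R v j" using spectral[OF symq_Vmat[of A poff]] unfolding Voff_def by metis
  have \<mu>nn: "\<mu> j \<ge> 0" for j
  proof -
    have "\<mu> j = v j \<bullet> (Voff *v v j)" using ev[of j] on[of j j] by simp
    thus ?thesis unfolding Voff_def using Vmat_psd[of A poff] pon by simp
  qed
  define c where "c = (1 - \<alpha>) * L"
  have cpos: "c > 0" unfolding c_def using a1 Lpos by simp
  define s where "s = (\<lambda>j. 1 / (c + \<alpha> * \<mu> j))"
  have dpos: "c + \<alpha> * \<mu> j > 0" for j using cpos a0 \<mu>nn[of j] by (simp add: add_pos_nonneg)
  have key: "s j \<le> v j \<bullet> (X *v v j)" for j
  proof -
    define y where "y = s j *\<^sub>R v j"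
    have yy: "y \<bullet> y = (s j)^2" unfolding y_def using on[of j j] by (simp add: power2_eq_square)
    have yv: "y \<bullet> v j = s j" unfolding y_def using on[of j j] by simp
    have yVoff: "y \<bullet> (Voff *v y) = (s j)^2 * \<mu> j"
      unfolding y_def scaleR_mulv' ev using on[of j j] by (simp add: power2_eq_square)
    have yVp: "y \<bullet> (Vmat A pstar *v y) \<le> L * (y \<bullet> y)" by (rule quad_le_L[OF fin AlA pS L])
    have "y \<bullet> (V *v y) = (1 - \<alpha>) * (y \<bullet> (Vmat A pstar *v y)) + \<alpha> * (y \<bullet> (Voff *v y))"
      unfolding V_def Voff_def by (rule Vmix_quad)
    also have "\<dots> \<le> (1 - \<alpha>) * (L * (y \<bullet> y)) + \<alpha> * (y \<bullet> (Voff *v y))"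
      using yVp a1 by (intro add_right_mono mult_left_mono) auto
    also have "\<dots> = (s j)^2 * (c + \<alpha> * \<mu> j)" unfolding yy yVoff c_def by (simp add: algebra_simps)
    also have "\<dots> = s j" unfolding s_def using dpos[of j] by (simp add: power2_eq_square)
    finally have "y \<bullet> (V *v y) \<le> s j" .
    moreover have "2 * (y \<bullet> v j) - y \<bullet> (V *v y) \<le> v j \<bullet> (X *v v j)" by (rule var_ineq[OF Vpsd Vsym VX])
    ultimately show ?thesis unfolding yv by simp
  qed
  have "trace (X ** Voff) = (\<Sum>j\<in>UNIV. \<mu> j * (v j \<bullet> (X *v v j)))"
    by (subst spec_decomp[OF on ev]) (simp add: mult_sum trace_sum trace_scaleR trace_outer)
  moreover have "trace (X ** Voff) = (\<Sum>a\<in>A. poff a * wnorm2 a X)" unfolding Voff_def by (rule trace_Vmat)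
  ultimately have "(\<Sum>a\<in>A. poff a * wnorm2 a X) \<ge> (\<Sum>j\<in>UNIV. \<mu> j * s j)"
    using key \<mu>nn by (simp add: sum_mono mult_left_mono)
  hence "real CARD('n) - \<alpha> * (\<Sum>a\<in>A. poff a * wnorm2 a X) \<le> (\<Sum>j\<in>(UNIV::'n set). 1) - \<alpha> * (\<Sum>j\<in>UNIV. \<mu> j * s j)"
    using a0 by (simp add: mult_left_mono)
  also have "\<dots> = (\<Sum>j\<in>UNIV. 1 - \<alpha> * \<mu> j * s j)" by (simp add: sum_subtractf sum_distrib_left mult.assoc)
  also have "\<dots> = (\<Sum>j\<in>UNIV. inverse (1 + (real Toff / real T) * \<mu> j / L))"
  proof (rule sum.cong[OF refl])
    fix j
    have "1 - \<alpha> * \<mu> j * s j = c / (c + \<alpha> * \<mu> j)" unfolding s_def using dpos[of j]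
      by (simp add: field_simps)
    also have "\<dots> = (real T * L) / (real T * L + real Toff * \<mu> j)"
    proof -
      have at: "real Toff + real T > 0" using Tpos by simp
      have "1 - \<alpha> = real T / (real Toff + real T)" unfolding al using at by (simp add: field_simps)
      hence "c = real T * L / (real Toff + real T)" unfolding c_def by simp
      moreover have "\<alpha> * \<mu> j = real Toff * \<mu> j / (real Toff + real T)" unfolding al by simp
      ultimately have "c + \<alpha> * \<mu> j = (real T * L + real Toff * \<mu> j) / (real Toff + real T)"
        by (simp add: add_divide_distrib)
      thus ?thesis using at \<open>c = real T * L / (real Toff + real T)\<close> by simp
    qed
    also have "\<dots> = inverse (1 + (real Toff / real T) * \<mu> j / L)"
    proof -
      have p: "real T * L + real Toff * \<mu> j > 0" using Tpos Lpos \<mu>nn[of j] by (simp add: add_pos_nonneg)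
      have "1 + (real Toff / real T) * \<mu> j / L = (real T * L + real Toff * \<mu> j) / (real T * L)"
        using Tpos Lpos by (simp add: field_simps)
      thus ?thesis using p by simp
    qed
    finally show "1 - \<alpha> * \<mu> j * s j = inverse (1 + (real Toff / real T) * \<mu> j / L)" .
  qed
  also have "\<dots> = (\<Sum>k=1..CARD('n). inverse (1 + (real Toff / real T) * eig Voff k / L))"
    by (rule eig_sum[OF on ev, symmetric])
  finally show ?thesis unfolding X_def V_def Voff_def .
qed

lemma claim2b:
  fixes A Al :: "(real^'n) set" and pstar poff :: "real^'n \<Rightarrow> real" and T Toff :: nat
  assumes fin: "finite A" and AlA: "Al \<subseteq> A" and ne: "Al \<noteq> {}" and pS: "pstar \<in> prob_simplex Al"
    and poffS: "poff \<in> prob_simplex A" and T: "T \<ge> 1" and Toff: "Toff > 0"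
    and al: "\<alpha> = real Toff / (real Toff + real T)"
    and inv: "invertible (Vmat A (mix \<alpha> pstar poff))"
    and invoff: "invertible (Vmat A poff)"
  shows "(1 - \<alpha>) * gfun A Al (mix \<alpha> pstar poff) \<le> real T / real Toff * gfun A A poff"
proof -
  have Tpos: "real T > 0" using T by simp
  have a0: "0 < \<alpha>" unfolding al using Toff Tpos by simp
  have a1: "\<alpha> < 1" unfolding al using Tpos by (simp add: divide_less_eq)
  define V where "V = Vmat A (mix \<alpha> pstar poff)"
  define X where "X = matrix_inv V"
  define Voff where "Voff = Vmat A poff"
  define Xoff where "Xoff = matrix_inv Voff"
  have psn: "\<And>b. 0 \<le> pstar b" using pS by (auto simp: prob_simplex_def)
  have pon: "\<And>b. 0 \<le> poff b" using poffS by (auto simp: prob_simplex_def)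
  have VX: "V ** X = mat 1" unfolding X_def V_def using inv_props[OF inv] by simp
  have VXoff: "Voff ** Xoff = mat 1" unfolding Xoff_def Voff_def using inv_props[OF invoff] by simp
  have Voffpsd: "\<And>z. 0 \<le> z \<bullet> (Voff *v z)" unfolding Voff_def by (rule Vmat_psd) (use pon in auto)
  have Voffsym: "\<And>x y. y \<bullet> (Voff *v x) = x \<bullet> (Voff *v y)" unfolding Voff_def by (rule Vmat_sym)
  have finAl: "finite Al" using fin AlA finite_subset by blast
  define q where "q = (\<lambda>a. wnorm2 a X)"
  have "gfun A Al (mix \<alpha> pstar poff) \<in> q ` Al"
    unfolding gfun_def q_def X_def V_def using finAl ne by (intro Max_in) auto
  then obtain a where a: "a \<in> Al" and ga: "gfun A Al (mix \<alpha> pstar poff) = q a" by auto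
  have aA: "a \<in> A" using a AlA by auto
  have bound: "\<alpha> * q a \<le> wnorm2 a Xoff"
  proof -
    define y where "y = X *v a"
    define z where "z = \<alpha> *\<^sub>R y"
    have "2 * (z \<bullet> a) - z \<bullet> (Voff *v z) \<le> a \<bullet> (Xoff *v a)" by (rule var_ineq[OF Voffpsd Voffsym VXoff])
    moreover have za: "z \<bullet> a = \<alpha> * q a" unfolding z_def y_def q_def wnorm2_def by (simp add: inner_commute)
    moreover have zz: "z \<bullet> (Voff *v z) = \<alpha>^2 * (y \<bullet> (Voff *v y))"
      unfolding z_def by (simp add: scaleR_mulv' power2_eq_square)
    moreover have "\<alpha> * (y \<bullet> (Voff *v y)) \<le> q a"
    proof -
      have "y \<bullet> (V *v y) = q a" unfolding y_def q_def wnorm2_def matrix_vector_mul_assoc VX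
        by (simp add: inner_commute)
      moreover have "y \<bullet> (V *v y) = (1 - \<alpha>) * (y \<bullet> (Vmat A pstar *v y)) + \<alpha> * (y \<bullet> (Voff *v y))"
        unfolding V_def Voff_def by (rule Vmix_quad)
      moreover have "0 \<le> y \<bullet> (Vmat A pstar *v y)" by (rule Vmat_psd) (use psn in auto)
      ultimately show ?thesis using a1 by (smt (verit) mult_nonneg_nonneg)
    qed
    hence "\<alpha>^2 * (y \<bullet> (Voff *v y)) \<le> \<alpha> * q a" using a0
      by (metis mult.assoc mult_left_mono power2_eq_square less_imp_le)
    ultimately show ?thesis unfolding wnorm2_def by simp
  qed
  have "wnorm2 a Xoff \<le> gfun A A poff"
    unfolding gfun_def Xoff_def Voff_def using fin aA by (intro Max_ge) auto
  hence qa: "q a \<le> gfun A A poff / \<alpha>" using bound a0 by (simp add: le_divide_eq mult.commute)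
  have "(1 - \<alpha>) * gfun A Al (mix \<alpha> pstar poff) \<le> (1 - \<alpha>) * (gfun A A poff / \<alpha>)"
    unfolding ga using qa a1 by (intro mult_left_mono) auto
  also have "(1 - \<alpha>) * (gfun A A poff / \<alpha>) = real T / real Toff * gfun A A poff"
  proof -
    have at: "real Toff + real T > 0" using Tpos by simp
    have "1 - \<alpha> = real T / (real Toff + real T)" unfolding al using at by (simp add: field_simps)
    hence "(1 - \<alpha>) / \<alpha> = real T / real Toff" unfolding al using at Toff by simp
    thus ?thesis by (metis times_divide_eq_right times_divide_eq_left mult.commute)
  qed
  finally show ?thesis .
qed

lemma mult_scaleR: "(V :: real^'n^'n) ** (t *\<^sub>R M) = t *\<^sub>R (V ** M)"
  by (simp add: vec_eq_iff matrix_matrix_mult_def sum_distrib_left mult_ac)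

lemma first_order:
  fixes A Al :: "(real^'n) set" and pstar poff :: "real^'n \<Rightarrow> real"
  assumes fin: "finite A" and AlA: "Al \<subseteq> A" and a01: "0 \<le> \<alpha>" "\<alpha> < 1"
    and poffnn: "\<And>b. 0 \<le> poff b"
    and pS: "pstar \<in> prob_simplex Al"
    and opt: "\<forall>p\<in>prob_simplex Al. logdet (Vmat A (mix \<alpha> p poff)) \<le> logdet (Vmat A (mix \<alpha> pstar poff))"
    and inv: "invertible (Vmat A (mix \<alpha> pstar poff))"
    and a: "a \<in> Al"
  shows "wnorm2 a (matrix_inv (Vmat A (mix \<alpha> pstar poff)))
     \<le> (\<Sum>b\<in>A. pstar b * wnorm2 b (matrix_inv (Vmat A (mix \<alpha> pstar poff))))"
proof -
  define V where "V = Vmat A (mix \<alpha> pstar poff)"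
  define X where "X = matrix_inv V"
  define B where "B = (1 - \<alpha>) *\<^sub>R (outer a a - Vmat A pstar)"
  define C where "C = X ** B"
  define h where "h = (\<lambda>t. det (mat 1 + t *\<^sub>R C))"
  have finAl: "finite Al" using fin AlA finite_subset by blast
  have aA: "a \<in> A" using a AlA by auto
  have psn: "\<And>b. 0 \<le> pstar b" "\<And>b. b \<notin> Al \<Longrightarrow> pstar b = 0" "sum pstar Al = 1"
    using pS by (auto simp: prob_simplex_def)
  have wnn: "0 \<le> mix \<alpha> pstar poff b" for b
    unfolding mix_def using a01 psn(1) poffnn by (intro add_nonneg_nonneg mult_nonneg_nonneg) auto
  have detV: "det V > 0" unfolding V_def by (rule det_pos_Vmat[OF wnn inv])
  have VX: "V ** X = mat 1" unfolding X_def V_def using inv_props[OF inv] by simp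
  have hle: "h t \<le> 1" if t: "0 \<le> t" "t \<le> 1" for t
  proof -
    define pt where "pt = (\<lambda>b. (1 - t) * pstar b + t * (if b = a then 1 else 0))"
    have "pt \<in> prob_simplex Al"
    proof -
      have "sum pt Al = (1 - t) * sum pstar Al + t * (\<Sum>b\<in>Al. if b = a then 1 else 0)"
        unfolding pt_def by (simp add: sum.distrib sum_distrib_left)
      also have "\<dots> = 1" using psn(3) a finAl by simp
      finally show ?thesis unfolding prob_simplex_def pt_def using t psn(1,2) a
        by (auto intro!: add_nonneg_nonneg mult_nonneg_nonneg)
    qed
    hence le: "logdet (Vmat A (mix \<alpha> pt poff)) \<le> logdet V" using opt V_def by auto
    have "mix \<alpha> pt poff = (\<lambda>b. mix \<alpha> pstar poff b + (t * (1 - \<alpha>)) * ((if b = a then 1 else 0) - pstar b))"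
      unfolding mix_def pt_def by (rule ext) (simp add: algebra_simps)
    hence "Vmat A (mix \<alpha> pt poff) = Vmat A (mix \<alpha> pstar poff) + Vmat A (\<lambda>b. (t * (1 - \<alpha>)) * ((if b = a then 1 else 0) - pstar b))"
      using Vmat_add[of A "mix \<alpha> pstar poff" "\<lambda>b. (t * (1 - \<alpha>)) * ((if b = a then 1 else 0) - pstar b)"] by simp
    also have "Vmat A (\<lambda>b. (t * (1 - \<alpha>)) * ((if b = a then 1 else 0) - pstar b)) = (t * (1 - \<alpha>)) *\<^sub>R Vmat A (\<lambda>b. (if b = a then 1 else 0) - pstar b)"
      by (rule Vmat_cmult)
    also have "Vmat A (\<lambda>b. (if b = a then 1 else 0) - pstar b) = outer a a - Vmat A pstar"
      using Vmat_diff[of A "\<lambda>b. if b = a then 1 else 0" pstar] Vmat_delta[OF fin aA] by simp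
    finally have "Vmat A (mix \<alpha> pt poff) = V + (t * (1 - \<alpha>)) *\<^sub>R (outer a a - Vmat A pstar)"
      unfolding V_def .
    also have "\<dots> = V + t *\<^sub>R B" unfolding B_def by simp
    also have "\<dots> = V ** (mat 1 + t *\<^sub>R C)"
    proof -
      have "V ** (t *\<^sub>R C) = t *\<^sub>R (V ** C)" by (rule mult_scaleR)
      also have "V ** C = B" unfolding C_def matrix_mul_assoc VX by simp
      finally show ?thesis unfolding matrix_add_ldistrib by simp
    qed
    finally have eq: "Vmat A (mix \<alpha> pt poff) = V ** (mat 1 + t *\<^sub>R C)" .
    have "det (V ** (mat 1 + t *\<^sub>R C)) \<le> det V"
    proof (cases "det (V ** (mat 1 + t *\<^sub>R C)) > 0")
      case True
      hence "ereal (ln (det (V ** (mat 1 + t *\<^sub>R C)))) \<le> ereal (ln (det V))"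
        using le detV unfolding eq logdet_def by simp
      thus ?thesis using True detV by simp
    next
      case False thus ?thesis using detV by simp
    qed
    hence "det V * h t \<le> det V * 1" unfolding h_def det_mul by simp
    thus ?thesis using detV by simp
  qed
  have h0: "h 0 = 1" unfolding h_def by simp
  have trC: "trace C \<le> 0"
  proof (rule ccontr)
    assume "\<not> trace C \<le> 0"
    hence "trace C > 0" by simp
    then obtain d where d: "d > 0" "\<And>s. s > 0 \<Longrightarrow> s < d \<Longrightarrow> h 0 < h (0 + s)"
      using DERIV_pos_inc_right[OF det_deriv[of C]] unfolding h_def by blast
    define s where "s = min (d / 2) 1"
    have "s > 0" "s < d" "s \<le> 1" using d(1) unfolding s_def by auto
    hence "1 < h s" using d(2)[of s] h0 by simp
    moreover have "h s \<le> 1" using hle \<open>s > 0\<close> \<open>s \<le> 1\<close> by simp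
    ultimately show False by simp
  qed
  have "trace C = (1 - \<alpha>) * (wnorm2 a X - (\<Sum>b\<in>A. pstar b * wnorm2 b X))"
  proof -
    have "X ** (outer a a - Vmat A pstar) = X ** outer a a - X ** Vmat A pstar"
      by (simp add: vec_eq_iff matrix_matrix_mult_def right_diff_distrib sum_subtractf)
    thus ?thesis unfolding C_def B_def trace_scaleR
      by (simp add: trace_sub trace_outer trace_Vmat wnorm2_def)
  qed
  with trC a01 have "wnorm2 a X - (\<Sum>b\<in>A. pstar b * wnorm2 b X) \<le> 0"
    by (simp add: mult_le_0_iff)
  thus ?thesis unfolding X_def V_def by simp
qed


theorem lemma4p4:
  fixes A Al :: "(real^'n) set" and poff pstar :: "real^'n \<Rightarrow> real" and T Toff :: nat
    and \<alpha> :: real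
  assumes "finite A" and "span A = UNIV"
    and "poff \<in> prob_simplex A"
    and "T \<ge> 1"
    and "Al \<subseteq> A" and "Al \<noteq> {}"
    and "\<alpha> = real Toff / (real Toff + real T)"
    and "pstar \<in> prob_simplex Al"
    and "\<forall>p\<in>prob_simplex Al. logdet (Vmat A (mix \<alpha> p poff)) \<le> logdet (Vmat A (mix \<alpha> pstar poff))"
    and "invertible (Vmat A (mix \<alpha> pstar poff))"
  shows "real CARD('n) = (1 - \<alpha>) * gfun A Al (mix \<alpha> pstar poff)
           + \<alpha> * (\<Sum>a\<in>A. poff a * wnorm2 a (matrix_inv (Vmat A (mix \<alpha> pstar poff))))
    \<and> ereal ((1 - \<alpha>) * gfun A Al (mix \<alpha> pstar poff)) \<le> d_eff A poff T Toff
    \<and> (\<forall>p\<in>prob_simplex Al. invertible (Vmat A (mix \<alpha> p poff)) \<longrightarrow>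
           real CARD('n) \<le> (1 - \<alpha>) * gfun A Al (mix \<alpha> p poff)
             + \<alpha> * (\<Sum>a\<in>A. poff a * wnorm2 a (matrix_inv (Vmat A (mix \<alpha> p poff)))))"
proof -
  note fin = assms(1) and spanA = assms(2) and poffS = assms(3) and T = assms(4)
    and AlA = assms(5) and ne = assms(6) and al = assms(7) and pS = assms(8)
    and opt = assms(9) and inv = assms(10)
  have Tpos: "real T > 0" using T by simp
  have a0: "0 \<le> \<alpha>" unfolding al by simp
  have a1: "\<alpha> < 1" unfolding al using Tpos by (simp add: divide_less_eq)
  have pon: "\<And>b. 0 \<le> poff b" using poffS by (auto simp: prob_simplex_def)
  have finAl: "finite Al" using fin AlA finite_subset by blast
  define q where "q = (\<lambda>a. wnorm2 a (matrix_inv (Vmat A (mix \<alpha> pstar poff))))"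
  define avg where "avg = (\<Sum>b\<in>A. pstar b * q b)"
  have fo: "q a \<le> avg" if "a \<in> Al" for a
    unfolding q_def avg_def by (rule first_order[OF fin AlA a0 a1 pon pS opt inv that])
  have g_eq: "gfun A Al (mix \<alpha> pstar poff) = avg"
  proof (rule antisym)
    show "gfun A Al (mix \<alpha> pstar poff) \<le> avg"
      unfolding gfun_def q_def[symmetric] using finAl ne fo by (intro Max.boundedI) auto
    have "avg = (\<Sum>b\<in>Al. pstar b * q b)" unfolding avg_def by (rule sum_A_Al[OF fin AlA pS])
    also have "\<dots> \<le> Max (q ` Al)" by (rule wavg_le_max[OF finAl pS])
    finally show "avg \<le> gfun A Al (mix \<alpha> pstar poff)" unfolding gfun_def q_def .
  qed
  have c1: "real CARD('n) = (1 - \<alpha>) * gfun A Al (mix \<alpha> pstar poff)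
           + \<alpha> * (\<Sum>a\<in>A. poff a * wnorm2 a (matrix_inv (Vmat A (mix \<alpha> pstar poff))))"
    using d_split[OF inv] unfolding g_eq avg_def q_def .
  define L where "L = Max ((\<lambda>a. (norm a)^2) ` A)"
  have Lb: "\<And>a. a \<in> A \<Longrightarrow> (norm a)^2 \<le> L" unfolding L_def using fin by (intro Max_ge) auto
  have Lpos: "L > 0"
  proof -
    obtain a where aA: "a \<in> A" and anz: "a \<noteq> 0"
    proof (rule ccontr)
      assume "\<not> thesis"
      hence "A \<subseteq> {0}" using that by blast
      hence "span A \<subseteq> {0}" by (metis span_empty span_insert_0 span_mono subset_singletonD empty_subsetI order.refl)
      moreover have "axis undefined (1::real) \<noteq> (0 :: real^'n)" by (simp add: axis_eq_0_iff)
      ultimately show False using spanA by auto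
    qed
    have "0 < (norm a)^2" using anz by simp
    also have "\<dots> \<le> L" by (rule Lb[OF aA])
    finally show ?thesis .
  qed
  have c2a: "(1 - \<alpha>) * gfun A Al (mix \<alpha> pstar poff) \<le>
      (\<Sum>k=1..CARD('n). inverse (1 + (real Toff / real T) * eig (Vmat A poff) k / L))"
    using claim2a[OF fin AlA pS poffS T al inv Lpos Lb] c1 by linarith
  have c2: "ereal ((1 - \<alpha>) * gfun A Al (mix \<alpha> pstar poff)) \<le> d_eff A poff T Toff"
  proof -
    have "ereal ((1 - \<alpha>) * gfun A Al (mix \<alpha> pstar poff)) \<le>
        (if Toff > 0 \<and> invertible (Vmat A poff) then ereal (real T / real Toff * gfun A A poff) else \<infinity>)"
    proof (cases "Toff > 0 \<and> invertible (Vmat A poff)")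
      case True
      hence h: "Toff > 0" "invertible (Vmat A poff)" by auto
      have "(1 - \<alpha>) * gfun A Al (mix \<alpha> pstar poff) \<le> real T / real Toff * gfun A A poff"
        by (rule claim2b[OF fin AlA ne pS poffS T h(1) al inv h(2)])
      thus ?thesis using True by simp
    next
      case False
      show ?thesis unfolding if_not_P[OF False] by simp
    qed
    thus ?thesis using c2a unfolding d_eff_def L_def by simp
  qed
  have c3: "\<forall>p\<in>prob_simplex Al. invertible (Vmat A (mix \<alpha> p poff)) \<longrightarrow>
           real CARD('n) \<le> (1 - \<alpha>) * gfun A Al (mix \<alpha> p poff)
             + \<alpha> * (\<Sum>a\<in>A. poff a * wnorm2 a (matrix_inv (Vmat A (mix \<alpha> p poff))))"
    using claim3[OF fin AlA ne a0 a1] by blast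
  show ?thesis using c1 c2 c3 by blast
qed


end
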